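(* Let $X=(\vec x_i)_{i\ge1}$ be the infinite sequence in $[0,1]^2$ defined as follows: for each integer $\ell\ge2$ let $n_\ell:=\ell\lceil\ln^2\ell\rceil+1$ and $\theta_\ell:=\frac{\pi}{2(n_\ell-1)}$; for $0\le j\le n_\ell-1$ let $\vec x_{\ell,j}:=(\cos(j\theta_\ell),\sin(j\theta_\ell))$ if $\ell$ is even and $\vec x_{\ell,j}:=(\sin(j\theta_\ell),\cos(j\theta_\ell))$ if $\ell$ is odd; the sequence lists all $\vec x_{\ell,j}$ lexicographically in $(\ell,j)$. Then \[\sup_{(c_i)_{i\ge1}\,:\,c_i\in[0,\sqrt2]}\ \sum_{i\ge1} c_i\,\vec x_i\cdot(\vec x_i-\vec x_{i+1}) \;=\;\sqrt2\sum_{i\ge1}\bigl(1-\vec x_i\cdot\vec x_{i+1}\bigr)\;\le\;6.\] *)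

theory Defs
  imports "HOL-Analysis.Analysis"
begin

definition blk_n :: "nat \<Rightarrow> nat" where
  "blk_n l = l * nat \<lceil>(ln (real l))\<^sup>2\<rceil> + 1"

definition blk_theta :: "nat \<Rightarrow> real" where
  "blk_theta l = pi / (2 * (real (blk_n l) - 1))"

definition blk_point :: "nat \<Rightarrow> nat \<Rightarrow> real \<times> real" where
  "blk_point l j =
     (if even l then (cos (real j * blk_theta l), sin (real j * blk_theta l))
      else (sin (real j * blk_theta l), cos (real j * blk_theta l)))"

definition blk_start :: "nat \<Rightarrow> nat" where
  "blk_start l = (\<Sum>k\<in>{2..<l}. blk_n k)"

text \<open>The sequence X, indexed from 1: the i-th point (i \<ge> 1) is x_{l,j} where
  the (i-1)-th position (counting from 0) lies in block l at offset j,
  blocks listed lexicographically in (l,j).  The value at index 0 is irrelevant.\<close>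
definition Xseq :: "nat \<Rightarrow> real \<times> real" where
  "Xseq i =
     (let l = (LEAST l. 2 \<le> l \<and> i - 1 < blk_start (Suc l))
      in blk_point l (i - 1 - blk_start l))"

end

theory Submission
  imports Defs "HOL-Analysis.Harmonic_Numbers"
begin

lemma one_le_c: "2 \<le> l \<Longrightarrow> 1 \<le> nat \<lceil>(ln (real l))\<^sup>2\<rceil>"
proof -
  assume "2 \<le> l"
  then have "ln (real l) > 0" by simp
  then have "(ln (real l))\<^sup>2 > 0" by simp
  then have "\<lceil>(ln (real l))\<^sup>2\<rceil> \<ge> 1" by (meson ceiling_less_one not_le)
  then show ?thesis by linarith
qed

lemma blk_n_ge2: "2 \<le> l \<Longrightarrow> 2 \<le> blk_n l"
proof -
  assume l: "2 \<le> l"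
  have "1 \<le> l * nat \<lceil>(ln (real l))\<^sup>2\<rceil>" using one_le_c[OF l] l
    by (metis dual_order.trans le_square mult_le_mono nat_1_eq_mult_iff one_le_numeral) 
  then show ?thesis unfolding blk_n_def by simp
qed

lemma blk_start_Suc: "2 \<le> l \<Longrightarrow> blk_start (Suc l) = blk_start l + blk_n l"
  unfolding blk_start_def by (simp add: sum.atLeastLessThan_Suc)

lemma blk_start_mono: "a \<le> b \<Longrightarrow> blk_start a \<le> blk_start b"
  unfolding blk_start_def by (rule sum_mono2) auto

lemma blk_start_ge: "l - 1 \<le> blk_start (Suc l)"
proof -
  have "of_nat (card {2..<Suc l}) * 1 \<le> blk_start (Suc l)"
    unfolding blk_start_def
    by (rule sum_bounded_below) (use blk_n_ge2 in fastforce)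
  then show ?thesis by simp
qed

lemma blk_start_2: "blk_start 2 = 0" unfolding blk_start_def by simp

lemma Xseq_block:
  assumes l: "2 \<le> l" and j: "j < blk_n l"
  shows "Xseq (Suc (blk_start l + j)) = blk_point l j"
proof -
  have "(LEAST l'. 2 \<le> l' \<and> blk_start l + j < blk_start (Suc l')) = l"
  proof (rule Least_equality)
    show "2 \<le> l \<and> blk_start l + j < blk_start (Suc l)"
      using l j blk_start_Suc[OF l] by simp
  next
    fix y assume y: "2 \<le> y \<and> blk_start l + j < blk_start (Suc y)"
    show "l \<le> y"
    proof (rule ccontr)
      assume "\<not> l \<le> y"
      then have "blk_start (Suc y) \<le> blk_start l" by (intro blk_start_mono) simp
      with y show False by simp
    qed
  qed
  then show ?thesis unfolding Xseq_def by (simp add: Let_def)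
qed

lemma block_exists: "\<exists>l j. 2 \<le> l \<and> j < blk_n l \<and> k = blk_start l + j"
proof -
  define P where "P = (\<lambda>l'. 2 \<le> l' \<and> k < blk_start (Suc l'))"
  have ex: "P (k + 2)" unfolding P_def using blk_start_ge[of "k+2"] by simp
  define l where "l = (LEAST l'. P l')"
  have Pl: "P l" unfolding l_def by (rule LeastI[of P, OF ex])
  have ge: "blk_start l \<le> k"
  proof (cases "l = 2")
    case True then show ?thesis by (simp add: blk_start_2)
  next
    case False
    with Pl have l3: "3 \<le> l" unfolding P_def by simp
    have "\<not> P (l - 1)" unfolding l_def
      by (rule not_less_Least) (use Pl l3 in \<open>simp add: l_def\<close>)
    with l3 have "blk_start (Suc (l - 1)) \<le> k" unfolding P_def by (simp add: not_less)
    with l3 show ?thesis by (simp add: Suc_diff_1)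
  qed
  show ?thesis
    apply (rule exI[of _ l], rule exI[of _ "k - blk_start l"])
    using Pl ge blk_start_Suc[of l] unfolding P_def by auto
qed

definition aa :: "nat \<Rightarrow> real" where
  "aa k = 1 - Xseq (Suc k) \<bullet> Xseq (Suc (Suc k))"

lemma nm1: "2 \<le> l \<Longrightarrow> real (blk_n l) - 1 = real l * real (nat \<lceil>(ln (real l))\<^sup>2\<rceil>)"
  unfolding blk_n_def by simp

lemma nm1_pos: "2 \<le> l \<Longrightarrow> real (blk_n l) - 1 > 0"
  using blk_n_ge2[of l] by simp

lemma angle: "2 \<le> l \<Longrightarrow> (real (blk_n l) - 1) * blk_theta l = pi/2"
  using nm1_pos[of l] unfolding blk_theta_def by (simp add: field_simps)

lemma theta_pos: "2 \<le> l \<Longrightarrow> blk_theta l > 0"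
  using nm1_pos[of l] unfolding blk_theta_def by simp

lemma point_unit: "blk_point l j \<bullet> blk_point l j = 1"
  unfolding blk_point_def by (simp add: power2_eq_square[symmetric])

lemma Xseq_unit: "Xseq (Suc k) \<bullet> Xseq (Suc k) = 1"
proof -
  obtain l j where "2 \<le> l" "j < blk_n l" "k = blk_start l + j" using block_exists by blast
  then show ?thesis using Xseq_block point_unit by simp
qed

lemma a_block:
  assumes l: "2 \<le> l" and j: "j < blk_n l"
  shows "aa (blk_start l + j) = (if j + 1 < blk_n l then 1 - cos (blk_theta l) else 0)"
proof (cases "j + 1 < blk_n l")
  case True
  have x1: "Xseq (Suc (blk_start l + j)) = blk_point l j" using Xseq_block[OF l j] .
  have x2: "Xseq (Suc (Suc (blk_start l + j))) = blk_point l (j+1)"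
    using Xseq_block[OF l True] by simp
  have c: "cos (real j * blk_theta l) * cos (real (j+1) * blk_theta l)
        + sin (real j * blk_theta l) * sin (real (j+1) * blk_theta l) = cos (blk_theta l)"
  proof -
    have "cos (real j * blk_theta l - real (j+1) * blk_theta l) = cos (blk_theta l)"
      by (simp add: algebra_simps)
    then show ?thesis by (simp add: cos_diff)
  qed
  show ?thesis using True c unfolding aa_def x1 x2 blk_point_def
    by (auto simp: algebra_simps)
next
  case False
  then have jn: "j = blk_n l - 1" using j by simp
  have x1: "Xseq (Suc (blk_start l + j)) = blk_point l j" using Xseq_block[OF l j] .
  have l1: "2 \<le> Suc l" using l by simp
  have x2: "Xseq (Suc (Suc (blk_start l + j))) = blk_point (Suc l) 0"
    using Xseq_block[OF l1, of 0] blk_n_ge2[OF l1] blk_start_Suc[OF l] jn blk_n_ge2[OF l]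
    by (simp add: Suc_diff_1)
  have h: "real j * blk_theta l = pi/2"
    using angle[OF l] jn blk_n_ge2[OF l] by (simp add: of_nat_diff)
  show ?thesis using False unfolding aa_def x1 x2 blk_point_def h
    by auto
qed

lemma aa_nonneg: "0 \<le> aa k"
proof -
  obtain l j where "2 \<le> l" "j < blk_n l" "k = blk_start l + j" using block_exists by blast
  then show ?thesis using a_block by (simp add: cos_le_one)
qed

lemma sum_split_add: "sum (f::nat\<Rightarrow>real) {..<m + n} = sum f {..<m} + (\<Sum>j<n. f (m + j))"
  by (induction n) (auto simp: add.assoc)

definition TT :: "nat \<Rightarrow> real" where
  "TT l = (real (blk_n l) - 1) * (1 - cos (blk_theta l))"

lemma block_sum: "2 \<le> l \<Longrightarrow> (\<Sum>j<blk_n l. aa (blk_start l + j)) = TT l"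
proof -
  assume l: "2 \<le> l"
  obtain m where m: "blk_n l = Suc m" using blk_n_ge2[OF l] by (cases "blk_n l") auto
  have "(\<Sum>j<blk_n l. aa (blk_start l + j))
      = (\<Sum>j<blk_n l. (if j + 1 < blk_n l then 1 - cos (blk_theta l) else 0))"
    by (rule sum.cong) (auto simp: a_block[OF l])
  also have "\<dots> = real m * (1 - cos (blk_theta l))"
    unfolding m by (simp add: sum.lessThan_Suc)
  finally show ?thesis unfolding TT_def m by simp
qed

lemma blocks_sum: "2 \<le> L \<Longrightarrow> (\<Sum>k<blk_start L. aa k) = (\<Sum>l\<in>{2..<L}. TT l)"
proof (induction rule: dec_induct)
  case base
  then show ?case by (simp add: blk_start_2)
next
  case (step L)
  then show ?case
    by (simp add: blk_start_Suc sum_split_add block_sum sum.atLeastLessThan_Suc)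
qed

lemma one_minus_cos: "1 - cos (x::real) \<le> x^2 / 2"
proof -
  have "cos x = cos (2 * (x/2))" by simp
  also have "\<dots> = 1 - 2 * sin (x/2) ^ 2" by (rule cos_double_sin)
  finally have e: "1 - cos x = 2 * sin (x/2) ^ 2" by simp
  have "sin (x/2) ^ 2 \<le> (x/2)^2"
    using abs_sin_x_le_abs_x[of "x/2"]
    by (metis abs_ge_zero power2_abs power_mono)
  then show ?thesis unfolding e by (simp add: power_divide)
qed

lemma TT_bound:
  assumes l: "2 \<le> l"
  shows "TT l \<le> pi^2 / (8 * real l * real (nat \<lceil>(ln (real l))\<^sup>2\<rceil>))"
proof -
  define N where "N = real (blk_n l) - 1"
  have N: "N > 0" unfolding N_def using nm1_pos[OF l] .
  have th: "blk_theta l = pi / (2 * N)" unfolding N_def blk_theta_def ..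
  have "TT l \<le> N * (blk_theta l ^ 2 / 2)"
    unfolding TT_def N_def[symmetric] using N one_minus_cos by (simp add: mult_left_mono)
  also have "\<dots> = pi^2 / (8 * N)" unfolding th using N by (simp add: field_simps power2_eq_square)
  finally show ?thesis unfolding N_def nm1[OF l] by (simp add: mult.assoc)
qed

lemma TT_bound2: "2 \<le> l \<Longrightarrow> TT l \<le> pi^2 / (8 * real l * (ln (real l))\<^sup>2)"
proof -
  assume l: "2 \<le> l"
  have lnp: "ln (real l) > 0" using l by simp
  have c: "(ln (real l))\<^sup>2 \<le> real (nat \<lceil>(ln (real l))\<^sup>2\<rceil>)"
    by (metis le_of_int_ceiling of_int_of_nat_eq of_nat_nat zero_le_power2 ceiling_mono ceiling_zero) 
  have "pi^2 / (8 * real l * real (nat \<lceil>(ln (real l))\<^sup>2\<rceil>)) \<le> pi^2 / (8 * real l * (ln (real l))\<^sup>2)"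
    using l lnp c by (intro divide_left_mono mult_left_mono) auto
  then show ?thesis using TT_bound[OF l] by (rule order_trans[rotated])
qed

lemma TT_bound1: "2 \<le> l \<Longrightarrow> TT l \<le> pi^2 / (8 * real l)"
proof -
  assume l: "2 \<le> l"
  have "pi^2 / (8 * real l * real (nat \<lceil>(ln (real l))\<^sup>2\<rceil>)) \<le> pi^2 / (8 * real l * 1)"
    using l one_le_c[OF l] by (intro divide_left_mono mult_left_mono) auto
  then show ?thesis using TT_bound[OF l] by simp
qed

lemma telescope_ineq:
  assumes l: "3 \<le> l"
  shows "1 / (real l * (ln (real l))\<^sup>2) \<le> 1 / ln (real l - 1) - 1 / ln (real l)"
proof -
  define a where "a = ln (real l - 1)"
  define b where "b = ln (real l)"
  have a: "a > 0" unfolding a_def using l by simp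
  have ab: "a \<le> b" unfolding a_def b_def using l by simp
  have "ln ((real l - 1) / real l) \<le> (real l - 1) / real l - 1"
    by (rule ln_le_minus_one) (use l in simp)
  also have "\<dots> = - 1 / real l" using l by (simp add: field_simps)
  finally have "a - b \<le> - 1 / real l" unfolding a_def b_def using l by (simp add: ln_div)
  then have d: "1 / real l \<le> b - a" by simp
  have "1 / (real l * b\<^sup>2) = (1 / real l) / (b * b)" by (simp add: power2_eq_square)
  also have "\<dots> \<le> (b - a) / (b * b)" using d a ab by (intro divide_right_mono) auto
  also have "\<dots> \<le> (b - a) / (a * b)" using d a ab l
    by (intro divide_left_mono mult_right_mono) auto
  also have "\<dots> = 1 / a - 1 / b" using a ab by (simp add: field_simps)
  finally show ?thesis unfolding a_def b_def .
qed

lemma TT_sum_bound3: "3 \<le> L \<Longrightarrow>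
  (\<Sum>l\<in>{2..<L}. TT l) \<le> pi^2/16 + pi^2/8 * (1 / ln 2 - 1 / ln (real L - 1))"
proof (induction rule: dec_induct)
  case base
  have "TT 2 \<le> pi^2/16" using TT_bound1[of 2] by simp
  have "{2..<3::nat} = {2}" by auto
  then show ?case using \<open>TT 2 \<le> pi^2/16\<close> by simp
next
  case (step L)
  have "TT L \<le> pi^2 / 8 * (1 / (real L * (ln (real L))\<^sup>2))"
    using TT_bound2[of L] step by simp
  also have "\<dots> \<le> pi^2 / 8 * (1 / ln (real L - 1) - 1 / ln (real L))"
    using telescope_ineq[of L] step by (intro mult_left_mono) auto
  finally show ?case using step by (simp add: sum.atLeastLessThan_Suc algebra_simps)
qed

lemma TT_sum_bound: "(\<Sum>l\<in>{2..<L}. TT l) \<le> pi^2/16 + pi^2/(8 * ln 2)"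
proof (cases "3 \<le> L")
  case True
  have "1 / ln (real L - 1) > 0" using True by simp
  then have "pi^2/8 * (1 / ln 2 - 1 / ln (real L - 1)) \<le> pi^2/(8 * ln 2)"
    by (simp add: field_simps)
  then show ?thesis using TT_sum_bound3[OF True] by linarith
next
  case False
  have p0: "0 \<le> pi^2/(8 * ln (2::real))" by simp
  have p1: "0 \<le> pi^2/(16::real)" by simp
  have t2: "TT 2 \<le> pi^2/16" using TT_bound1[of 2] by simp
  have "{2..<L} = {} \<or> {2..<L} = {2}" using False by auto
  then show ?thesis
  proof
    assume "{2..<L} = {}" then show ?thesis using p0 p1 by simp
  next
    assume "{2..<L} = {2}"
    then have "(\<Sum>l\<in>{2..<L}. TT l) = TT 2" by simp
    then show ?thesis using p0 t2 by linarith
  qed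
qed

lemma partial_bound: "(\<Sum>k<N. aa k) \<le> pi^2/16 + pi^2/(8 * ln 2)"
proof -
  have "(\<Sum>k<N. aa k) \<le> (\<Sum>k<blk_start (N+2). aa k)"
    using blk_start_ge[of "N+1"] aa_nonneg by (intro sum_mono2) auto
  also have "\<dots> = (\<Sum>l\<in>{2..<N+2}. TT l)" by (rule blocks_sum) simp
  also have "\<dots> \<le> pi^2/16 + pi^2/(8 * ln 2)" by (rule TT_sum_bound)
  finally show ?thesis .
qed

lemma B_bound: "sqrt 2 * (pi^2/16 + pi^2/(8 * ln 2)) \<le> 6"
proof -
  have "pi^2 \<le> (4::real)^2" using pi_less_4 pi_gt_zero by (intro power_mono) auto
  then have p: "pi^2 \<le> 16" by simp
  have l2: "2/3 \<le> ln (2::real)" by (rule ln2_ge_two_thirds)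
  have "pi^2/(8 * ln 2) \<le> 16 / (8 * (2/3))"
    using p l2 by (intro frac_le) auto
  then have B: "pi^2/16 + pi^2/(8 * ln 2) \<le> 4" using p by simp
  have s: "sqrt 2 \<le> (3/2::real)"
    by (rule real_le_lsqrt) (auto simp: power2_eq_square)
  have "sqrt 2 * (pi^2/16 + pi^2/(8 * ln 2)) \<le> 3/2 * 4"
    using B s by (intro mult_mono) auto
  then show ?thesis by simp
qed

theorem proposition5p6:
  shows "summable (\<lambda>k. 1 - Xseq (Suc k) \<bullet> Xseq (Suc (Suc k)))
    \<and> (SUP c\<in>{c :: nat \<Rightarrow> real. \<forall>i\<ge>1. c i \<in> {0..sqrt 2}}.
          (\<Sum>k. c (Suc k) * (Xseq (Suc k) \<bullet> (Xseq (Suc k) - Xseq (Suc (Suc k))))))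
        = sqrt 2 * (\<Sum>k. 1 - Xseq (Suc k) \<bullet> Xseq (Suc (Suc k)))
    \<and> sqrt 2 * (\<Sum>k. 1 - Xseq (Suc k) \<bullet> Xseq (Suc (Suc k))) \<le> 6"
proof -
  have e1: "(\<lambda>k. 1 - Xseq (Suc k) \<bullet> Xseq (Suc (Suc k))) = aa" by (simp add: aa_def fun_eq_iff)
  have e2: "\<And>k. Xseq (Suc k) \<bullet> (Xseq (Suc k) - Xseq (Suc (Suc k))) = aa k"
    by (simp add: aa_def inner_diff_right Xseq_unit)
  have sa: "summable aa"
    by (rule summableI_nonneg_bounded[OF aa_nonneg partial_bound])
  have le: "suminf aa \<le> pi^2/16 + pi^2/(8 * ln 2)"
    by (rule suminf_le_const[OF sa partial_bound])
  define S where "S = {c :: nat \<Rightarrow> real. \<forall>i\<ge>1. c i \<in> {0..sqrt 2}}"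
  have sup: "(SUP c\<in>S. (\<Sum>k. c (Suc k) * aa k)) = sqrt 2 * suminf aa"
    unfolding image_def
  proof (rule cSup_eq_maximum)
    have "(\<lambda>_. sqrt 2) \<in> S" unfolding S_def by auto
    moreover have "sqrt 2 * suminf aa = (\<Sum>k. (\<lambda>_. sqrt 2) (Suc k) * aa k)"
      using suminf_mult[OF sa, of "sqrt 2"] by simp
    ultimately show "sqrt 2 * suminf aa \<in> {y. \<exists>x\<in>S. y = (\<Sum>k. x (Suc k) * aa k)}"
      by (intro CollectI bexI[of _ "\<lambda>_. sqrt 2"]) auto
  next
    fix y assume "y \<in> {y. \<exists>x\<in>S. y = (\<Sum>k. x (Suc k) * aa k)}"
    then obtain c where c: "c \<in> S" and y: "y = (\<Sum>k. c (Suc k) * aa k)" by blast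
    have cb: "\<And>k. 0 \<le> c (Suc k) \<and> c (Suc k) \<le> sqrt 2" using c unfolding S_def by auto
    have b: "\<And>k. c (Suc k) * aa k \<le> sqrt 2 * aa k"
      using cb aa_nonneg by (intro mult_right_mono) auto
    have s2: "summable (\<lambda>k. sqrt 2 * aa k)" using sa by (rule summable_mult)
    have s1: "summable (\<lambda>k. c (Suc k) * aa k)"
      by (rule summable_comparison_test'[OF s2, of 0]) (use b cb aa_nonneg in simp)
    have "y \<le> (\<Sum>k. sqrt 2 * aa k)" unfolding y by (rule suminf_le[OF b s1 s2])
    then show "y \<le> sqrt 2 * suminf aa" using suminf_mult[OF sa, of "sqrt 2"] by simp
  qed
  have fin: "sqrt 2 * suminf aa \<le> 6"
    using le B_bound by (meson mult_left_mono order_trans real_sqrt_ge_zero zero_le_numeral)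
  show ?thesis unfolding e1 e2 S_def[symmetric] using sa sup fin by simp
qed

end
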